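(* Suppose that $t$ is a canonical closed term of $\Psi$ and that $t\rightarrow u$ in $\Psi$. Then there is a natural number $n$ such that: (1) $\langle\!\langle t\rangle\!\rangle_\Psi\rightarrow_h\langle\!\langle u\rangle\!\rangle_\Psi$; (2) there is a canonical term $v$ with $u\rightarrow^n v$; (3) $\#_{\mathbf{app}}(w)=\#_{\mathbf{app}}(u)+m$ whenever $u\rightarrow^m w$ and $m\le n$; (4) $\langle\!\langle w\rangle\!\rangle_\Psi=\langle\!\langle u\rangle\!\rangle_\Psi$ whenever $u\rightarrow^m w$ and $m\le n$.
   Context: $\lambda$-terms: $M::=x\mid\lambda x.M\mid MN$, variables from a set $\Upsilon$ with a fixed total order, $FV(M)$ the ordered sequence of free variables. Weak call-by-name reduction: $(\lambda x.M)N\rightarrow_h M\{N/x\}$, closed under $M\rightarrow_h N\Rightarrow ML\rightarrow_h NL$. $\Psi$: binary function symbol $\mathbf{app}$, binary constructor $\mathbf{capp}$, constructors $c_{x,M}$ ($M$ a $\lambda$-term, $x\in\Upsilon$) of arity the length of $FV(\lambda x.M)$. Translations: $[\![x]\!]'=x$, $[\![\lambda x.M]\!]'=c_{x,M}(x_1,\dots,x_n)$ ($FV(\lambda x.M)=x_1,\dots,x_n$), $[\![MN]\!]'=\mathbf{capp}([\![M]\!]',[\![N]\!]')$; $[\![x]\!]_\Psi=x$, $[\![\lambda x.M]\!]_\Psi=c_{x,M}(x_1,\dots,x_n)$, $[\![MN]\!]_\Psi=\mathbf{app}([\![M]\!]_\Psi,[\![N]\!]')$. Rules (any $\lambda$-term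 $M$, any abstraction or application $N$, distinct variables $z,w$): $\mathbf{app}(c_{z,z},\mathbf{capp}(w,f))\rightarrow\mathbf{app}(w,f)$; $\mathbf{app}(c_{z,z},c_{x,M}(x_1,\dots,x_n))\rightarrow c_{x,M}(x_1,\dots,x_n)$; $\mathbf{app}(c_{z,w}(\mathbf{capp}(f,g)),h)\rightarrow\mathbf{app}(f,g)$; $\mathbf{app}(c_{z,w}(c_{x,M}(x_1,\dots,x_n)),h)\rightarrow c_{x,M}(x_1,\dots,x_n)$; $\mathbf{app}(c_{y,N}(y_1,\dots,y_m),y)\rightarrow[\![N]\!]_\Psi$ ($FV(\lambda y.N)=y_1,\dots,y_m$); $\mathbf{app}(\mathbf{capp}(x,y),z)\rightarrow\mathbf{app}(\mathbf{app}(x,y),z)$. Rewriting is call-by-value: a step replaces anywhere a subterm $l\sigma$ by $r\sigma$, $\sigma$ mapping variables to constructor terms (closed terms built only from constructors, i.e. from $\mathbf{capp}$ and the $c_{x,M}$). Back translation: $\langle\!\langle x\rangle\!\rangle_\Psi=x$, $\langle\!\langle\mathbf{app}(u,v)\rangle\!\rangle_\Psi=\langle\!\langle\mathbf{capp}(u,v)\rangle\!\rangle_\Psi=\langle\!\langle u\rangle\!\rangle_\Psi\langle\!\langle v\rangle\!\rangle_\Psi$, $\langle\!\langle c_{x,M}(t_1,\dots,t_n)\rangle\!\rangle_\Psi=(\lambda x.M)\{\langle\!\langle t_1\rangle\!\rangle_\Psi/x_1,\dots,\langle\!\langle t_n\rangle\!\rangle_\Psi/x_n\}$. A closed term $t$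 is canonical if either $t=c_{x,M}(t_1,\dots,t_n)$ is a constructor term, or $t=\mathbf{app}(u,v)$ with $u$ canonical and $v$ a constructor term. $\#_{\mathbf{app}}(t)$ is the number of occurrences of $\mathbf{app}$ in $t$. *)

theory Defs
  imports Main
begin

datatype lterm = Var nat | Lam nat lterm | App lterm lterm

fun fv :: "lterm \<Rightarrow> nat set" where
  "fv (Var x) = {x}"
| "fv (Lam x M) = fv M - {x}"
| "fv (App M N) = fv M \<union> fv N"

lemma finite_fv [simp]: "finite (fv M)"
  by (induction M) auto

definition FVs :: "lterm \<Rightarrow> nat list" where
  "FVs M = sorted_list_of_set (fv M)"

text \<open>It does not rename bound variables; it is
  capture-avoiding whenever the substituted terms are closed, which is the
  only situation arising in the statement (all terms involved are closed).\<close>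
fun lsubst :: "(nat \<times> lterm) list \<Rightarrow> lterm \<Rightarrow> lterm" where
  "lsubst s (Var x) = (case map_of s x of Some N \<Rightarrow> N | None \<Rightarrow> Var x)"
| "lsubst s (Lam y M) = Lam y (lsubst (filter (\<lambda>p. fst p \<noteq> y) s) M)"
| "lsubst s (App M N) = App (lsubst s M) (lsubst s N)"

inductive hred :: "lterm \<Rightarrow> lterm \<Rightarrow> bool" where
  beta: "hred (App (Lam x M) N) (lsubst [(x, N)] M)"
| appL: "hred M N \<Longrightarrow> hred (App M L) (App N L)"

datatype pterm =
    PVar nat
  | PApp pterm pterm          \<comment> \<open>function symbol app\<close>
  | PCapp pterm pterm         \<comment> \<open>constructor capp\<close>
  | PC nat lterm "pterm list"

fun psub :: "(nat \<Rightarrow> pterm) \<Rightarrow> pterm \<Rightarrow> pterm" where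
  "psub \<sigma> (PVar x) = \<sigma> x"
| "psub \<sigma> (PApp t u) = PApp (psub \<sigma> t) (psub \<sigma> u)"
| "psub \<sigma> (PCapp t u) = PCapp (psub \<sigma> t) (psub \<sigma> u)"
| "psub \<sigma> (PC x M ts) = PC x M (map (psub \<sigma>) ts)"

fun trans' :: "lterm \<Rightarrow> pterm" where
  "trans' (Var x) = PVar x"
| "trans' (Lam x M) = PC x M (map PVar (FVs (Lam x M)))"
| "trans' (App M N) = PCapp (trans' M) (trans' N)"

fun transPsi :: "lterm \<Rightarrow> pterm" where
  "transPsi (Var x) = PVar x"
| "transPsi (Lam x M) = PC x M (map PVar (FVs (Lam x M)))"
| "transPsi (App M N) = PApp (transPsi M) (trans' N)"

fun is_var :: "lterm \<Rightarrow> bool" where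
  "is_var (Var x) = True"
| "is_var _ = False"

inductive_set psi_rules :: "(pterm \<times> pterm) set" where
  r1: "(PApp (PC z (Var z) []) (PCapp (PVar w) (PVar f)), PApp (PVar w) (PVar f)) \<in> psi_rules"
| r2: "(PApp (PC z (Var z) []) (PC x M (map PVar (FVs (Lam x M)))),
        PC x M (map PVar (FVs (Lam x M)))) \<in> psi_rules"
| r3: "z \<noteq> w \<Longrightarrow> (PApp (PC z (Var w) [PCapp (PVar f) (PVar g)]) (PVar h),
        PApp (PVar f) (PVar g)) \<in> psi_rules"
| r4: "z \<noteq> w \<Longrightarrow> (PApp (PC z (Var w) [PC x M (map PVar (FVs (Lam x M)))]) (PVar h),
        PC x M (map PVar (FVs (Lam x M)))) \<in> psi_rules"
| r5: "\<not> is_var N \<Longrightarrow> (PApp (PC y N (map PVar (FVs (Lam y N)))) (PVar y), transPsi N) \<in> psi_rules"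
| r6: "(PApp (PCapp (PVar x) (PVar y)) (PVar z), PApp (PApp (PVar x) (PVar y)) (PVar z)) \<in> psi_rules"

inductive cterm :: "pterm \<Rightarrow> bool" where
  cC: "length ts = length (FVs (Lam x M)) \<Longrightarrow> (\<forall>t\<in>set ts. cterm t) \<Longrightarrow> cterm (PC x M ts)"
| cCapp: "cterm a \<Longrightarrow> cterm b \<Longrightarrow> cterm (PCapp a b)"

text \<open>Call-by-value rewriting: replace anywhere an instance l\<sigma> by r\<sigma>,
  \<sigma> mapping variables to constructor terms.\<close>
inductive step :: "pterm \<Rightarrow> pterm \<Rightarrow> bool" where
  root: "(l, r) \<in> psi_rules \<Longrightarrow> (\<forall>x. cterm (\<sigma> x)) \<Longrightarrow> step (psub \<sigma> l) (psub \<sigma> r)"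
| appL: "step t t' \<Longrightarrow> step (PApp t u) (PApp t' u)"
| appR: "step u u' \<Longrightarrow> step (PApp t u) (PApp t u')"
| cappL: "step t t' \<Longrightarrow> step (PCapp t u) (PCapp t' u)"
| cappR: "step u u' \<Longrightarrow> step (PCapp t u) (PCapp t u')"
| arg: "i < length ts \<Longrightarrow> step (ts ! i) s \<Longrightarrow> step (PC x M ts) (PC x M (ts[i := s]))"

fun bt :: "pterm \<Rightarrow> lterm" where
  "bt (PVar x) = Var x"
| "bt (PApp u v) = App (bt u) (bt v)"
| "bt (PCapp u v) = App (bt u) (bt v)"
| "bt (PC x M ts) = lsubst (zip (FVs (Lam x M)) (map bt ts)) (Lam x M)"

inductive canonical :: "pterm \<Rightarrow> bool" where
  canC: "cterm (PC x M ts) \<Longrightarrow> canonical (PC x M ts)"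
| canApp: "canonical u \<Longrightarrow> cterm v \<Longrightarrow> canonical (PApp u v)"

fun napp :: "pterm \<Rightarrow> nat" where
  "napp (PVar x) = 0"
| "napp (PApp u v) = Suc (napp u + napp v)"
| "napp (PCapp u v) = napp u + napp v"
| "napp (PC x M ts) = sum_list (map napp ts)"

end

theory Submission
  imports Defs
begin

lemma map_of_filter_neq: "map_of (filter (\<lambda>p. fst p \<noteq> y) s) x = (if x = y then None else map_of s x)"
  by (induction s) auto

lemma lsubst_cong: "(\<forall>x\<in>fv M. map_of s1 x = map_of s2 x) \<Longrightarrow> lsubst s1 M = lsubst s2 M"
  by (induction M arbitrary: s1 s2) (auto simp: map_of_filter_neq)

lemma lsubst_id: "(\<forall>x\<in>fv M. map_of s x = None) \<Longrightarrow> lsubst s M = M"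
  by (induction M arbitrary: s) (auto simp: map_of_filter_neq)

lemma closed_lsubst: "fv M = {} \<Longrightarrow> lsubst s M = M"
  by (simp add: lsubst_id)

lemma fv_lsubst: "(\<forall>N\<in>snd ` set s. fv N = {}) \<Longrightarrow> fv (lsubst s M) = {x\<in>fv M. map_of s x = None}"
proof (induction M arbitrary: s)
  case (Var x)
  show ?case
  proof (cases "map_of s x")
    case None then show ?thesis by auto
  next
    case (Some N) then have "(x,N) \<in> set s" by (rule map_of_SomeD)
    with Var.prems have "fv N = {}" by force
    with Some show ?thesis by simp
  qed
next
  case (Lam y M)
  have "\<forall>N\<in>snd ` set (filter (\<lambda>p. fst p \<noteq> y) s). fv N = {}" using Lam.prems by auto
  from Lam.IH[OF this] show ?case by (auto simp: map_of_filter_neq)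
next
  case (App M N)
  then show ?case by auto
qed

lemma set_FVs: "set (FVs M) = fv M" by (simp add: FVs_def)

lemma cterm_closed: "cterm t \<Longrightarrow> fv (bt t) = {}"
proof (induction rule: cterm.induct)
  case (cC ts x M)
  have cl: "\<forall>N\<in>snd ` set (zip (FVs (Lam x M)) (map bt ts)). fv N = {}"
    using cC.IH by (auto dest!: set_zip_rightD)
  have e: "fv (Lam x M) = set (FVs (Lam x M))" by (simp only: set_FVs)
  have "fv (bt (PC x M ts)) = {y\<in>fv (Lam x M). map_of (zip (FVs (Lam x M)) (map bt ts)) y = None}"
    by (simp only: bt.simps fv_lsubst[OF cl])
  also have "\<dots> = {}" using cC.hyps(1) by (subst e) simp
  finally show ?case .
next
  case (cCapp a b) then show ?case by simp
qed

lemma lsubst_comp: "(\<forall>N\<in>snd ` set s1. fv N = {}) \<Longrightarrow> lsubst s2 (lsubst s1 M) = lsubst (s1 @ s2) M"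
proof (induction M arbitrary: s1 s2)
  case (Var x)
  show ?case
  proof (cases "map_of s1 x")
    case None then show ?thesis by (simp add: map_add_def)
  next
    case (Some N) then have "(x,N) \<in> set s1" by (rule map_of_SomeD)
    with Var.prems have "fv N = {}" by force
    with Some show ?thesis by (simp add: map_add_def closed_lsubst)
  qed
next
  case (Lam y M)
  have "\<forall>N\<in>snd ` set (filter (\<lambda>p. fst p \<noteq> y) s1). fv N = {}" using Lam.prems by auto
  from Lam.IH[OF this] show ?case by simp
next
  case (App M N) then show ?case by simp
qed

lemma map_of_zip_map: "x \<in> set ks \<Longrightarrow> map_of (zip ks (map f ks)) x = Some (f x)"
  by (induction ks) auto

lemma bt_trans': "(\<forall>x\<in>fv N. map_of s x = Some (bt (\<sigma> x))) \<Longrightarrow> bt (psub \<sigma> (trans' N)) = lsubst s N"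
proof (induction N arbitrary: s)
  case (Lam x M)
  have "bt (psub \<sigma> (trans' (Lam x M))) = lsubst (zip (FVs (Lam x M)) (map (\<lambda>v. bt (\<sigma> v)) (FVs (Lam x M)))) (Lam x M)"
    by (simp add: comp_def)
  also have "\<dots> = lsubst s (Lam x M)"
    apply (rule lsubst_cong)
    using Lam.prems by (simp add: map_of_zip_map set_FVs del: fv.simps)
  finally show ?case .
qed auto

lemma bt_transPsi: "bt (psub \<sigma> (transPsi N)) = bt (psub \<sigma> (trans' N))"
  by (induction N) auto

lemma cterm_not_app: "cterm (PApp a b) \<Longrightarrow> False"
  by (cases rule: cterm.cases) auto

lemma cterm_napp: "cterm t \<Longrightarrow> napp t = 0"
  by (induction rule: cterm.induct) (auto simp: sum_list_eq_0_iff)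

lemma cterm_nostep: "step t t' \<Longrightarrow> cterm t \<Longrightarrow> False"
proof (induction rule: step.induct)
  case (root l r \<sigma>)
  from root(1,3) show ?case by (cases rule: psi_rules.cases) (auto dest: cterm_not_app)
next
  case (arg i ts s x M)
  then show ?case by (auto elim: cterm.cases)
qed (auto dest: cterm_not_app elim: cterm.cases)

inductive sp :: "pterm \<Rightarrow> bool" where
  spB: "cterm c \<Longrightarrow> cterm v \<Longrightarrow> sp (PApp c v)"
| spC: "cterm (PC x M ts) \<Longrightarrow> sp (PC x M ts)"
| spA: "sp s \<Longrightarrow> cterm v \<Longrightarrow> sp (PApp s v)"

fun D :: "pterm \<Rightarrow> nat" where
  "D (PVar x) = 0" | "D (PApp s v) = D s" | "D (PCapp a b) = Suc (D a)" | "D (PC x M ts) = 0"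

lemma sp_not_capp: "sp (PCapp a b) \<Longrightarrow> False"
  by (cases rule: sp.cases) auto

lemma beta': "Q = lsubst [(x,N)] M \<Longrightarrow> hred (App (Lam x M) N) Q"
  by (simp add: hred.beta)

lemma cterm_trans': "\<forall>x. cterm (\<sigma> x) \<Longrightarrow> cterm (psub \<sigma> (trans' N))"
  by (induction N) (auto intro!: cterm.intros)

lemma sp_transPsi: "\<forall>x. cterm (\<sigma> x) \<Longrightarrow> sp (psub \<sigma> (transPsi N)) \<or> is_var N"
proof (induction N)
  case (Lam x M) then show ?case by (auto intro!: spC cterm.intros)
next
  case (App N1 N2)
  show ?case
  proof (cases "is_var N1")
    case True then obtain y where "N1 = Var y" by (cases N1) auto
    then show ?thesis using App.prems by (auto intro!: spB cterm_trans')
  next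
    case False then show ?thesis using App by (auto intro!: spA cterm_trans')
  qed
qed auto

lemma root_case:
  assumes "(l,r) \<in> psi_rules" "\<forall>x. cterm (\<sigma> x)" "canonical (psub \<sigma> l)"
  shows "hred (bt (psub \<sigma> l)) (bt (psub \<sigma> r)) \<and> sp (psub \<sigma> r)"
  using assms(1)
proof (cases rule: psi_rules.cases)
  case (r1 z w f)
  then show ?thesis using assms(2) by (auto intro!: beta' spB)
next
  case (r2 z x M)
  then show ?thesis using assms(2) by (auto intro!: beta' spC cterm.intros)
next
  case (r3 z w f g h)
  have cl: "fv (bt (\<sigma> f)) = {}" "fv (bt (\<sigma> g)) = {}" using assms(2) cterm_closed by auto
  have fvs: "FVs (Lam z (Var w)) = [w]" using r3 by (simp add: FVs_def)
  show ?thesis using r3 assms(2) cl fvs by (auto intro!: beta' spB closed_lsubst[symmetric])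
next
  case (r4 z w x M h)
  have fvs: "FVs (Lam z (Var w)) = [w]" using r4 by (simp add: FVs_def)
  define C where "C = psub \<sigma> (PC x M (map PVar (FVs (Lam x M))))"
  have ct: "cterm C" using assms(2) unfolding C_def
    by (auto intro!: cterm.intros)
  have cl: "fv (bt C) = {}" using ct cterm_closed by blast
  have e1: "psub \<sigma> l = PApp (PC z (Var w) [C]) (\<sigma> h)" "psub \<sigma> r = C"
    using r4 by (simp_all add: C_def)
  have e2: "bt (PC z (Var w) [C]) = Lam z (bt C)" using fvs r4(3) by simp
  have "sp C" unfolding C_def using ct[unfolded C_def] by (simp only: psub.simps) (rule spC)
  moreover have "hred (bt (PApp (PC z (Var w) [C]) (\<sigma> h))) (bt C)"
    unfolding bt.simps(2) e2 by (rule beta', rule closed_lsubst[symmetric, OF cl])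
  ultimately show ?thesis unfolding e1 by blast
next
  case (r5 N y)
  define S where "S = zip (FVs (Lam y N)) (map (\<lambda>v. bt (\<sigma> v)) (FVs (Lam y N)))"
  have btl: "bt (psub \<sigma> l) = App (Lam y (lsubst (filter (\<lambda>p. fst p \<noteq> y) S) N)) (bt (\<sigma> y))"
    unfolding r5 S_def by (simp only: psub.simps bt.simps lsubst.simps map_map comp_def)
  have clS: "\<forall>N\<in>snd ` set (filter (\<lambda>p. fst p \<noteq> y) S). fv N = {}"
    using assms(2) cterm_closed by (auto simp: S_def dest!: set_zip_rightD)
  have "lsubst [(y, bt (\<sigma> y))] (lsubst (filter (\<lambda>p. fst p \<noteq> y) S) N)
        = lsubst (filter (\<lambda>p. fst p \<noteq> y) S @ [(y, bt (\<sigma> y))]) N"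
    by (rule lsubst_comp[OF clS])
  also have "\<dots> = bt (psub \<sigma> (trans' N))"
  proof (rule bt_trans'[symmetric], intro ballI)
    fix x assume x: "x \<in> fv N"
    show "map_of (filter (\<lambda>p. fst p \<noteq> y) S @ [(y, bt (\<sigma> y))]) x = Some (bt (\<sigma> x))"
    proof (cases "x = y")
      case True then show ?thesis by (simp add: map_of_filter_neq map_add_def)
    next
      case False
      then have "x \<in> set (FVs (Lam y N))" using x by (simp add: set_FVs)
      then show ?thesis using False by (simp add: map_of_filter_neq map_add_def S_def map_of_zip_map)
    qed
  qed
  finally have "hred (bt (psub \<sigma> l)) (bt (psub \<sigma> r))"
    unfolding btl using r5 by (auto intro!: beta' simp: bt_transPsi)
  moreover have "sp (psub \<sigma> r)" using sp_transPsi[OF assms(2), of N] r5 by auto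
  ultimately show ?thesis by blast
next
  case (r6 x y z)
  then show ?thesis using assms(3) by (auto elim: canonical.cases)
qed

lemma main_step: "canonical t \<Longrightarrow> step t u \<Longrightarrow> hred (bt t) (bt u) \<and> sp u"
proof (induction t arbitrary: u rule: canonical.induct)
  case (canC x M ts)
  then show ?case using cterm_nostep by blast
next
  case (canApp s v)
  from canApp.prems show ?case
  proof (cases rule: step.cases)
    case (root l r \<sigma>)
    then show ?thesis using root_case[of l r \<sigma>] canonical.canApp[OF canApp.hyps] by auto
  next
    case (appL s')
    then show ?thesis using canApp.IH[of s'] by (auto intro: hred.appL spA canApp.hyps)
  next
    case (appR v')
    then show ?thesis using cterm_nostep canApp.hyps by blast
  qed
qed

lemma cterm_D0: "cterm c \<Longrightarrow> D c = 0 \<Longrightarrow> \<exists>x M ts. c = PC x M ts"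
  by (cases rule: cterm.cases) auto

lemma cterm_DSuc: "cterm c \<Longrightarrow> D c = Suc k \<Longrightarrow> \<exists>a b. c = PCapp a b \<and> cterm a \<and> cterm b \<and> D a = k"
  by (cases rule: cterm.cases) auto

lemma sp_canonical: "sp u \<Longrightarrow> D u = 0 \<Longrightarrow> canonical u"
proof (induction rule: sp.induct)
  case (spB c v)
  then obtain x M ts where "c = PC x M ts" using cterm_D0 by force
  then show ?case using spB by (auto intro!: canonical.intros)
qed (auto intro: canonical.intros)

lemma r6_step: "cterm a \<Longrightarrow> cterm b \<Longrightarrow> cterm c \<Longrightarrow> step (PApp (PCapp a b) c) (PApp (PApp a b) c)"
proof -
  assume h: "cterm a" "cterm b" "cterm c"
  define \<sigma> where "\<sigma> = (\<lambda>n::nat. if n = 0 then a else if n = 1 then b else c)"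
  have "\<forall>x. cterm (\<sigma> x)" using h by (simp add: \<sigma>_def)
  from step.root[OF psi_rules.r6[of 0 1 2] this] show ?thesis by (simp add: \<sigma>_def)
qed

lemma sp_exists_step: "sp u \<Longrightarrow> D u = Suc k \<Longrightarrow> \<exists>w. step u w"
proof (induction rule: sp.induct)
  case (spB c v)
  then obtain a b where "c = PCapp a b" "cterm a" "cterm b" using cterm_DSuc by force
  then show ?case using spB r6_step by blast
next
  case (spA s v) then show ?case by (auto intro: step.appL)
qed auto

lemma sp_step: "sp u \<Longrightarrow> D u = Suc k \<Longrightarrow> step u w \<Longrightarrow>
   sp w \<and> D w = k \<and> napp w = Suc (napp u) \<and> bt w = bt u"
proof (induction arbitrary: w rule: sp.induct)
  case (spB c v)
  then obtain a b where ab: "c = PCapp a b" "cterm a" "cterm b" "D a = k" using cterm_DSuc by force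
  from spB.prems(2) show ?case
  proof (cases rule: step.cases)
    case (root l r \<sigma>)
    from root(3) show ?thesis
    proof (cases rule: psi_rules.cases)
      case (r6 x y z)
      then show ?thesis using root ab spB.hyps
        by (auto intro!: sp.spA[OF sp.spB] simp: cterm_napp)
    qed (use root ab in auto)
  next
    case (appL t')
    have "cterm (PCapp a b)" using ab by (auto intro: cterm.intros)
    then show ?thesis using appL ab cterm_nostep by blast
  next
    case (appR u') then show ?thesis using spB.hyps cterm_nostep by blast
  qed
next
  case (spC x M ts) then show ?case by simp
next
  case (spA s v)
  from spA.prems(2) show ?case
  proof (cases rule: step.cases)
    case (root l r \<sigma>)
    from root(3) show ?thesis
      by (cases rule: psi_rules.cases) (use root spA in \<open>auto dest: sp_not_capp\<close>)
  next
    case (appL t') then show ?thesis using spA by (auto intro: sp.spA)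
  next
    case (appR u') then show ?thesis using spA.hyps cterm_nostep by blast
  qed
qed

lemma sp_iter: "sp u \<Longrightarrow> m \<le> D u \<Longrightarrow> (step ^^ m) u w \<Longrightarrow>
   sp w \<and> D w = D u - m \<and> napp w = napp u + m \<and> bt w = bt u"
proof (induction m arbitrary: w)
  case 0 then show ?case by simp
next
  case (Suc m)
  from Suc.prems(3) obtain y where y: "(step ^^ m) u y" "step y w" by (rule relpowp_Suc_E)
  have iy: "sp y \<and> D y = D u - m \<and> napp y = napp u + m \<and> bt y = bt u"
    using Suc.IH[OF Suc.prems(1) _ y(1)] Suc.prems(2) by simp
  have "D y = Suc (D u - Suc m)" using iy Suc.prems(2) by simp
  from sp_step[OF _ this y(2)] iy show ?case by simp
qed

lemma sp_reach: "sp u \<Longrightarrow> \<exists>v. canonical v \<and> (step ^^ D u) u v"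
proof (induction "D u" arbitrary: u)
  case 0 then show ?case using sp_canonical by fastforce
next
  case (Suc k)
  obtain w where w: "step u w" using sp_exists_step[OF Suc.prems Suc.hyps(2)[symmetric]] by blast
  have "sp w \<and> D w = k" using sp_step[OF Suc.prems Suc.hyps(2)[symmetric] w] by simp
  with Suc.hyps(1)[of w] obtain v where "canonical v" "(step ^^ k) w v" by auto
  then show ?case using w Suc.hyps(2) relpowp_Suc_I2 by metis
qed

theorem lemma15:
  assumes "canonical t" and "step t u"
  shows "\<exists>n::nat.
           hred (bt t) (bt u)
         \<and> (\<exists>v. canonical v \<and> (step ^^ n) u v)
         \<and> (\<forall>m w. (step ^^ m) u w \<and> m \<le> n \<longrightarrow> napp w = napp u + m)
         \<and> (\<forall>m w. (step ^^ m) u w \<and> m \<le> n \<longrightarrow> bt w = bt u)"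
proof -
  from main_step[OF assms] have h: "hred (bt t) (bt u)" and s: "sp u" by auto
  show ?thesis
    apply (rule exI[of _ "D u"])
    using h sp_reach[OF s] sp_iter[OF s] by blast
qed

end
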